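(* Let $N\ge1$ and let $A$ be an $(N+1)\times N$ complex matrix such that any set of $N$ rows of $A$ is linearly independent. Then the $N(N+1)\times N(N+1)$ matrix $$\hat A=\big[\, I_N\otimes A \ \ \ [D(A)]_{:,\{2,\dots,N+1\}}\,\big]$$ has full rank.
   Context: For a $K\times L$ matrix $B$ with entries $b_{ij}$, $D(B)$ denotes the $KL\times K$ matrix obtained by stacking vertically the diagonal matrices $\mathrm{diag}(b_{11},\dots,b_{K1}),\ \mathrm{diag}(b_{12},\dots,b_{K2}),\dots,\mathrm{diag}(b_{1L},\dots,b_{KL})$ (one $K\times K$ diagonal matrix per column of $B$). For a matrix $B$, $[B]_{:,\mathcal{S}}$ denotes the submatrix consisting of the columns indexed by $\mathcal{S}$. $\otimes$ is the Kronecker product. *)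

theory Defs
  imports "Jordan_Normal_Form.DL_Rank" "Jordan_Normal_Form.DL_Submatrix"
begin

definition kron_mat :: "'a::semiring_0 mat \<Rightarrow> 'a mat \<Rightarrow> 'a mat" where
  "kron_mat P Q = mat (dim_row P * dim_row Q) (dim_col P * dim_col Q)
     (\<lambda>(i,j). P $$ (i div dim_row Q, j div dim_col Q) * Q $$ (i mod dim_row Q, j mod dim_col Q))"

text \<open>D(B): for a K x L matrix B, the KL x K matrix stacking
  diag(b_{1l},...,b_{Kl}) for l = 1..L.  Row r = l*K + k (0-based).\<close>
definition D_mat :: "'a::zero mat \<Rightarrow> 'a mat" where
  "D_mat B = mat (dim_row B * dim_col B) (dim_row B)
     (\<lambda>(r,c). if r mod dim_row B = c then B $$ (c, r div dim_row B) else 0)"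

definition hcat_mat :: "'a::zero mat \<Rightarrow> 'a mat \<Rightarrow> 'a mat" where
  "hcat_mat P Q = mat (dim_row P) (dim_col P + dim_col Q)
     (\<lambda>(i,j). if j < dim_col P then P $$ (i,j) else Q $$ (i, j - dim_col P))"

end

theory Submission imports Defs begin

lemma pick_ivl1: "j < N \<Longrightarrow> pick {1..(N::nat)} j = j + 1"
proof (induction j)
  case 0 then show ?case by (simp, intro Least_equality) auto
next
  case (Suc j) then show ?case by (simp, intro Least_equality) auto
qed

lemma mat_vec_entry: "A \<in> carrier_mat n m \<Longrightarrow> v \<in> carrier_vec m \<Longrightarrow> i < n \<Longrightarrow>
  (A *\<^sub>v v) $ i = (\<Sum>j<m. A $$ (i,j) * v $ j)"
  by (auto simp: mult_mat_vec_def scalar_prod_def atLeast0LessThan)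

lemma dep_exists:
  fixes a :: "nat \<Rightarrow> nat \<Rightarrow> 'a::field"
  shows "\<exists>c. (\<exists>i<N+1. c i \<noteq> 0) \<and> (\<forall>j<N. (\<Sum>i<N+1. c i * a i j) = 0)"
proof -
  define B where "B = mat (N+1) (N+1) (\<lambda>(j,i). if j<N then a i j else 0)"
  have Bc: "B \<in> carrier_mat (N+1) (N+1)" unfolding B_def by auto
  have "det B = (\<Sum>j<N+1. B $$ (N,j) * cofactor B N j)"
    by (rule laplace_expansion_row[OF Bc]) auto
  also have "\<dots> = 0" by (auto simp: B_def)
  finally obtain v where v: "v \<in> carrier_vec (N+1)" "v \<noteq> 0\<^sub>v (N+1)" "B *\<^sub>v v = 0\<^sub>v (N+1)"
    using det_0_iff_vec_prod_zero_field[OF Bc] by blast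
  have "\<exists>i<N+1. v $ i \<noteq> 0" using v(1,2) by (auto simp: vec_eq_iff)
  moreover have "\<forall>j<N. (\<Sum>i<N+1. v $ i * a i j) = 0"
  proof (intro allI impI)
    fix j assume j: "j < N"
    have "(B *\<^sub>v v) $ j = 0" using v(3) j by simp
    then show "(\<Sum>i<N+1. v $ i * a i j) = 0"
      using mat_vec_entry[OF Bc v(1), of j] j by (simp add: B_def mult.commute)
  qed
  ultimately show ?thesis by blast
qed

lemma left_to_right:
  fixes b :: "nat \<Rightarrow> nat \<Rightarrow> 'a::field"
  assumes "\<forall>c. (\<forall>j<n. (\<Sum>i<n. c i * b i j) = 0) \<longrightarrow> (\<forall>i<n. c i = 0)"
    and "\<forall>i<n. (\<Sum>j<n. b i j * y j) = 0"
    and "j < n"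
  shows "y j = 0"
proof -
  define B where "B = mat n n (\<lambda>(i,j). b i j)"
  have Bc: "B \<in> carrier_mat n n" unfolding B_def by auto
  have BT: "transpose_mat B \<in> carrier_mat n n" using Bc by auto
  have "det (transpose_mat B) \<noteq> 0"
  proof
    assume "det (transpose_mat B) = 0"
    then obtain v where v: "v \<in> carrier_vec n" "v \<noteq> 0\<^sub>v n" "transpose_mat B *\<^sub>v v = 0\<^sub>v n"
      using det_0_iff_vec_prod_zero_field[OF BT] by blast
    have "\<forall>j<n. (\<Sum>i<n. v $ i * b i j) = 0"
    proof (intro allI impI)
      fix j assume j: "j < n"
      have "(transpose_mat B *\<^sub>v v) $ j = 0" using v(3) j by simp
      then show "(\<Sum>i<n. v $ i * b i j) = 0"
        using mat_vec_entry[OF BT v(1), of j] j by (simp add: B_def mult.commute)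
    qed
    then have "\<forall>i<n. v $ i = 0" using assms(1) by blast
    then show False using v(1,2) by (auto simp: vec_eq_iff)
  qed
  then have d: "det B \<noteq> 0" using det_transpose[OF Bc] by simp
  have w: "vec n y \<in> carrier_vec n" by simp
  have "B *\<^sub>v vec n y = 0\<^sub>v n"
  proof (rule eq_vecI)
    fix i assume i: "i < dim_vec (0\<^sub>v n :: 'a vec)"
    then show "(B *\<^sub>v vec n y) $ i = 0\<^sub>v n $ i"
      using mat_vec_entry[OF Bc w, of i] assms(2) by (simp add: B_def)
  qed (use Bc in auto)
  then have "vec n y = 0\<^sub>v n" using det_0_iff_vec_prod_zero_field[OF Bc] d w by blast
  then show ?thesis using assms(3) by (metis index_vec index_zero_vec(1))
qed

lemma M_entry:
  fixes A :: "'a::field mat"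
  assumes A: "A \<in> carrier_mat (N + 1) N" and N: "N \<ge> 1"
    and M: "M = hcat_mat (kron_mat (1\<^sub>m N) A) (submatrix (D_mat A) UNIV {1..N})"
  shows "M \<in> carrier_mat (N*(N+1)) (N*(N+1))"
    and "\<And>i j. i < N*(N+1) \<Longrightarrow> j < N*(N+1) \<Longrightarrow> M $$ (i,j) =
      (if j < N*N then (if i div (N+1) = j div N then A $$ (i mod (N+1), j mod N) else 0)
       else (if i mod (N+1) = j - N*N + 1 then A $$ (j - N*N + 1, i div (N+1)) else 0))"
proof -
  have r: "card {i. i < (N+1)*N \<and> i \<in> (UNIV::nat set)} = (N+1)*N" by simp
  have c: "{j. j < N+1 \<and> j \<in> {1..N}} = {1..N}" by auto
  have dk: "dim_row (kron_mat (1\<^sub>m N) A) = N*(N+1)" "dim_col (kron_mat (1\<^sub>m N) A) = N*N"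
    using A by (auto simp: kron_mat_def)
  have dD: "dim_row (D_mat A) = (N+1)*N" "dim_col (D_mat A) = N+1" using A by (auto simp: D_mat_def)
  have ds: "dim_row (submatrix (D_mat A) UNIV {1..N}) = (N+1)*N"
     "dim_col (submatrix (D_mat A) UNIV {1..N}) = N"
    unfolding dim_submatrix dD c using r by auto
  show "M \<in> carrier_mat (N*(N+1)) (N*(N+1))"
    unfolding M hcat_mat_def dk ds by (simp add: algebra_simps)
  fix i j assume i: "i < N*(N+1)" and j: "j < N*(N+1)"
  have Mij: "M $$ (i,j) = (if j < N*N then kron_mat (1\<^sub>m N) A $$ (i,j)
      else submatrix (D_mat A) UNIV {1..N} $$ (i, j - N*N))"
    unfolding M hcat_mat_def dk ds using i j by (subst index_mat) (auto simp: algebra_simps)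
  have idiv: "i div (N+1) < N" using i by (simp add: div_less_iff_less_mult mult.commute)
  have imod: "i mod (N+1) < N+1" by simp
  show "M $$ (i,j) =
      (if j < N*N then (if i div (N+1) = j div N then A $$ (i mod (N+1), j mod N) else 0)
       else (if i mod (N+1) = j - N*N + 1 then A $$ (j - N*N + 1, i div (N+1)) else 0))"
  proof (cases "j < N*N")
    case True
    have jdiv: "j div N < N" using True N by (simp add: div_less_iff_less_mult)
    have jmod: "j mod N < N" using N by simp
    show ?thesis using True i idiv jdiv A
      by (simp add: Mij kron_mat_def)
  next
    case False
    have jj: "j - N*N < N" using j False by (simp add: algebra_simps)
    have "submatrix (D_mat A) UNIV {1..N} $$ (i, j - N*N) = D_mat A $$ (i, j - N*N + 1)"
      using submatrix_index[of i "D_mat A" UNIV "j - N*N" "{1..N}"] i jj r c dD pick_ivl1[OF jj]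
      by (simp add: pick_UNIV algebra_simps)
    also have "\<dots> = (if i mod (N+1) = j - N*N + 1 then A $$ (j - N*N + 1, i div (N+1)) else 0)"
      using A i jj by (simp add: D_mat_def algebra_simps)
    finally show ?thesis using False by (simp add: Mij)
  qed
qed

theorem lemma3:
  fixes N :: nat and A :: "complex mat"
  assumes "N \<ge> 1"
    and "A \<in> carrier_mat (N + 1) N"
    and "\<forall>S \<subseteq> {..<N + 1}. card S = N \<longrightarrow>
           (\<forall>c :: nat \<Rightarrow> complex. (\<forall>j < N. (\<Sum>i\<in>S. c i * A $$ (i, j)) = 0)
              \<longrightarrow> (\<forall>i\<in>S. c i = 0))"
  shows "vec_space.rank (N * (N + 1))
           (hcat_mat (kron_mat (1\<^sub>m N) A) (submatrix (D_mat A) UNIV {1..N}))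
         = N * (N + 1)"
proof -
  note N = assms(1) and Ac = assms(2) and ind = assms(3)
  have indr: "\<And>S c i. S \<subseteq> {..<N+1} \<Longrightarrow> card S = N \<Longrightarrow>
      (\<forall>j<N. (\<Sum>i\<in>S. c i * A $$ (i,j)) = 0) \<Longrightarrow> i \<in> S \<Longrightarrow> c i = 0"
    using ind by blast
  define M where "M = hcat_mat (kron_mat (1\<^sub>m N) A) (submatrix (D_mat A) UNIV {1..N})"
  note Me = M_entry[OF Ac N M_def]
  let ?n = "N*(N+1)"
  have "det M \<noteq> 0"
  proof
    assume "det M = 0"
    then obtain v where v: "v \<in> carrier_vec ?n" "v \<noteq> 0\<^sub>v ?n" "M *\<^sub>v v = 0\<^sub>v ?n"
      using det_0_iff_vec_prod_zero_field[OF Me(1)] by blast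
    define y where "y l c = v $ (l*N + c)" for l c
    define z where "z k = (if k = 0 then 0 else v $ (N*N + k - 1))" for k
    have eq: "(\<Sum>c<N. A $$ (k,c) * y l c) + A $$ (k,l) * z k = 0" if l: "l < N" and k: "k < N+1" for l k
    proof -
      define i where "i = l*(N+1) + k"
      have "i < (l+1)*(N+1)" unfolding i_def using k by simp
      also have "\<dots> \<le> N*(N+1)" using l by (intro mult_right_mono) auto
      finally have i: "i < ?n" .
      have idiv: "i div (N+1) = l" unfolding i_def using k
        by (metis add.commute add_cancel_right_right div_less div_mult_self1 less_nat_zero_code)
      have imod: "i mod (N+1) = k" unfolding i_def using k
        by (metis add.commute mod_less mod_mult_self1)
      have "0 = (M *\<^sub>v v) $ i" using v(3) i by simp
      also have "\<dots> = (\<Sum>j<?n. M $$ (i,j) * v $ j)" by (rule mat_vec_entry[OF Me(1) v(1) i])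
      also have "\<dots> = (\<Sum>j\<in>{0..<N*N}. M $$ (i,j) * v $ j) + (\<Sum>j\<in>{N*N..<N*N+N}. M $$ (i,j) * v $ j)"
        by (subst sum.atLeastLessThan_concat) (auto simp: lessThan_atLeast0 algebra_simps)
      finally have s0: "0 = (\<Sum>j\<in>{0..<N*N}. M $$ (i,j) * v $ j) + (\<Sum>j\<in>{N*N..<N*N+N}. M $$ (i,j) * v $ j)" .
      have seteq: "{j\<in>{0..<N*N}. j div N = l} = (\<lambda>c. l*N + c) ` {..<N}"
      proof (intro equalityI subsetI)
        fix j assume "j \<in> {j\<in>{0..<N*N}. j div N = l}"
        then have "j div N = l" by simp
        then have "j = l*N + j mod N" "j mod N < N" using N by (auto simp: mult.commute)
        then show "j \<in> (\<lambda>c. l*N + c) ` {..<N}" by (metis imageI lessThan_iff)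
      next
        fix j assume "j \<in> (\<lambda>c. l*N + c) ` {..<N}"
        then obtain c where c: "c < N" "j = l*N + c" by auto
        have "l*N + c < (l+1)*N" using c by simp
        also have "\<dots> \<le> N*N" using l by (intro mult_right_mono) auto
        finally have "j < N*N" using c by simp
        moreover have "j div N = l" using c
          by (metis add.commute add_cancel_right_right div_less div_mult_self1 less_nat_zero_code)
        ultimately show "j \<in> {j\<in>{0..<N*N}. j div N = l}" by simp
      qed
      have "(\<Sum>j\<in>{0..<N*N}. M $$ (i,j) * v $ j) =
          (\<Sum>j\<in>{0..<N*N}. if j div N = l then A $$ (k, j mod N) * v $ j else 0)"
      proof (rule sum.cong)
        fix j assume "j \<in> {0..<N*N}"
        then have j: "j < N*N" by simp
        then have "j < ?n" by (simp add: algebra_simps)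
        then show "M $$ (i,j) * v $ j = (if j div N = l then A $$ (k, j mod N) * v $ j else 0)"
          using Me(2)[OF i] j idiv imod by auto
      qed simp
      also have "\<dots> = (\<Sum>j\<in>{j\<in>{0..<N*N}. j div N = l}. A $$ (k, j mod N) * v $ j)"
        by (rule sum.inter_filter[symmetric]) simp
      also have "\<dots> = (\<Sum>j\<in>(\<lambda>c. l*N + c) ` {..<N}. A $$ (k, j mod N) * v $ j)"
        unfolding seteq ..
      also have "(\<Sum>j\<in>(\<lambda>c. l*N + c) ` {..<N}. A $$ (k, j mod N) * v $ j) = (\<Sum>c<N. A $$ (k,c) * y l c)"
        by (subst sum.reindex) (auto simp: y_def inj_on_def)
      finally have s1: "(\<Sum>j\<in>{0..<N*N}. M $$ (i,j) * v $ j) = (\<Sum>c<N. A $$ (k,c) * y l c)" .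
      have "(\<Sum>j\<in>{N*N..<N*N+N}. M $$ (i,j) * v $ j) = (\<Sum>c<N. M $$ (i,N*N+c) * v $ (N*N+c))"
      proof -
        have "{N*N..<N*N+N} = (\<lambda>c. N*N + c) ` {..<N}" by (simp add: lessThan_atLeast0 add.commute)
        then show ?thesis by (simp add: sum.reindex inj_on_def)
      qed
      also have "\<dots> = (\<Sum>c<N. if c = k - 1 \<and> k \<noteq> 0 then A $$ (k, l) * v $ (N*N+c) else 0)"
      proof (rule sum.cong)
        fix c assume "c \<in> {..<N}"
        then have c: "c < N" by simp
        then have "N*N + c < ?n" by (simp add: algebra_simps)
        then show "M $$ (i,N*N+c) * v $ (N*N+c) = (if c = k - 1 \<and> k \<noteq> 0 then A $$ (k, l) * v $ (N*N+c) else 0)"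
          using Me(2)[OF i] c idiv imod by auto
      qed simp
      also have "\<dots> = A $$ (k,l) * z k"
      proof (cases "k = 0")
        case True then show ?thesis by (simp add: z_def)
      next
        case False
        then have "k - 1 < N" using k by simp
        then show ?thesis using False by (simp add: z_def sum.delta algebra_simps)
      qed
      finally have s2: "(\<Sum>j\<in>{N*N..<N*N+N}. M $$ (i,j) * v $ j) = A $$ (k,l) * z k" .
      show ?thesis using s0 s1 s2 by simp
    qed
    obtain c where c: "\<exists>i<N+1. c i \<noteq> 0" "\<forall>j<N. (\<Sum>i<N+1. c i * A $$ (i,j)) = 0"
      using dep_exists[of N "\<lambda>i j. A $$ (i,j)"] by blast
    have cnz: "c i \<noteq> 0" if i: "i < N+1" for i
    proof
      assume ci: "c i = 0"
      define S where "S = {..<N+1} - {i}"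
      have S: "S \<subseteq> {..<N+1}" "card S = N" unfolding S_def using i by auto
      have "\<forall>j<N. (\<Sum>i\<in>S. c i * A $$ (i, j)) = 0"
      proof (intro allI impI)
        fix j assume j: "j < N"
        have "(\<Sum>i\<in>S. c i * A $$ (i, j)) = (\<Sum>i<N+1. c i * A $$ (i,j)) - c i * A $$ (i,j)"
          unfolding S_def using i by (subst sum_diff1) auto
        then show "(\<Sum>i\<in>S. c i * A $$ (i, j)) = 0" using c(2) j ci by simp
      qed
      then have "\<forall>i'\<in>S. c i' = 0" using indr[OF S, of c] by blast
      then have "\<forall>i'<N+1. c i' = 0" using ci unfolding S_def by auto
      then show False using c(1) by blast
    qed
    have zl: "(\<Sum>k<N+1. (c k * z k) * A $$ (k,l)) = 0" if l: "l < N" for l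
    proof -
      have "(\<Sum>k<N+1. (c k * z k) * A $$ (k,l)) = (\<Sum>k<N+1. c k * (A $$ (k,l) * z k))"
        by (simp add: algebra_simps)
      also have "\<dots> = (\<Sum>k<N+1. c k * (- (\<Sum>cc<N. A $$ (k,cc) * y l cc)))"
      proof (rule sum.cong[OF refl])
        fix k assume "k \<in> {..<N+1}"
        then have "(\<Sum>cc<N. A $$ (k,cc) * y l cc) + A $$ (k,l) * z k = 0" using eq[OF l] by simp
        then have "A $$ (k,l) * z k = - (\<Sum>cc<N. A $$ (k,cc) * y l cc)"
          by (simp add: eq_neg_iff_add_eq_0 add.commute)
        then show "c k * (A $$ (k,l) * z k) = c k * (- (\<Sum>cc<N. A $$ (k,cc) * y l cc))" by simp
      qed
      also have "\<dots> = - (\<Sum>k<N+1. \<Sum>cc<N. c k * A $$ (k,cc) * y l cc)"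
        by (simp add: sum_distrib_left sum_negf mult.assoc)
      also have "\<dots> = - (\<Sum>cc<N. \<Sum>k<N+1. c k * A $$ (k,cc) * y l cc)"
        by (subst sum.swap) (rule refl)
      also have "\<dots> = - (\<Sum>cc<N. y l cc * (\<Sum>k<N+1. c k * A $$ (k,cc)))"
        unfolding sum_distrib_left by (simp only: mult_ac)
      also have "\<dots> = 0" using c(2) by simp
      finally show ?thesis .
    qed
    have zz: "z k = 0" if k: "k < N+1" for k
    proof (cases "k = 0")
      case True then show ?thesis by (simp add: z_def)
    next
      case False
      define S where "S = {..<N+1} - {0}"
      have S: "S \<subseteq> {..<N+1}" "card S = N" unfolding S_def by auto
      have "\<forall>j<N. (\<Sum>i\<in>S. (c i * z i) * A $$ (i, j)) = 0"
      proof (intro allI impI)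
        fix j assume j: "j < N"
        have "(\<Sum>i\<in>S. (c i * z i) * A $$ (i, j)) = (\<Sum>i<N+1. (c i * z i) * A $$ (i,j)) - (c 0 * z 0) * A $$ (0,j)"
          unfolding S_def by (subst sum_diff1) auto
        then show "(\<Sum>i\<in>S. (c i * z i) * A $$ (i, j)) = 0" using zl j by (simp add: z_def)
      qed
      moreover have "k \<in> S" using k False unfolding S_def by auto
      ultimately have "c k * z k = 0" using indr[OF S, of "\<lambda>i. c i * z i"] by blast
      then show ?thesis using cnz[OF k] by simp
    qed
    have yz: "y l j = 0" if l: "l < N" and j: "j < N" for l j
    proof (rule left_to_right[of N "\<lambda>i j. A $$ (i,j)"])
      show "\<forall>c. (\<forall>j<N. (\<Sum>i<N. c i * A $$ (i, j)) = 0) \<longrightarrow> (\<forall>i<N. c i = 0)"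
      proof (intro allI impI)
        fix cf i assume h: "\<forall>j<N. (\<Sum>i<N. cf i * A $$ (i, j)) = 0" and i: "i < N"
        have S: "{..<N} \<subseteq> {..<N+1}" "card {..<N} = N" by auto
        show "cf i = 0" using indr[OF S, of cf i] h i by simp
      qed
      show "\<forall>i<N. (\<Sum>j<N. A $$ (i, j) * y l j) = 0"
        using eq[OF l] zz by simp
    qed (rule j)
    have "v = 0\<^sub>v ?n"
    proof (rule eq_vecI)
      fix p assume "p < dim_vec (0\<^sub>v ?n :: complex vec)"
      then have p: "p < ?n" by simp
      show "v $ p = 0\<^sub>v ?n $ p"
      proof (cases "p < N*N")
        case True
        have "p div N < N" using True N by (simp add: div_less_iff_less_mult)
        moreover have "p mod N < N" using N by simp
        ultimately have "y (p div N) (p mod N) = 0" using yz by blast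
        then show ?thesis using p by (simp add: y_def mult.commute)
      next
        case False
        define k where "k = p - N*N + 1"
        have "k < N+1" "k \<noteq> 0" using p False unfolding k_def by (auto simp: algebra_simps)
        then have "z k = 0" using zz by blast
        then show ?thesis using p False unfolding z_def k_def by simp
      qed
    qed (use v(1) in simp)
    then show False using v(2) by simp
  qed
  then show ?thesis using vec_space.det_rank_iff[OF Me(1)] unfolding M_def by simp
qed

end
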